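(* Let $a\ge 2$ be an integer, let $p\in[0,1]$, and let $\lambda(z)=\sum_{i\ge1}\lambda_i z^i$ and $\rho(z)=\sum_{i\ge1}\rho_i z^i$ be degree-distribution polynomials, i.e. $\lambda_i,\rho_i\ge 0$, $\sum_{i\ge1}\lambda_i=\sum_{i\ge1}\rho_i=1$, and $\lambda'(1)=\sum_{i\ge1} i\lambda_i<\infty$. For $x\in[0,1]$ define $$A(x)=x+(1-x)\bigl(1-\lambda(1-px)\bigr),\qquad B(x)=1-\bigl(1-A(x)\bigr)^{a-1}\Bigl[1-\rho\bigl(A(x)^{a}\bigr)\Bigr],\qquad f(x)=A(x)\,B(x).$$ Let $x_0=\epsilon\in[0,1]$ and $x_l=f(x_{l-1})$ for $l\ge1$. If $$x_0<\frac{1}{(a-1)\bigl(1+p\,\lambda'(1)\bigr)^{2}},$$ then the system heals, i.e. $x_l\to 0$ as $l\to\infty$.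
   Context: This is the density-evolution recursion for a cyber-physical system model with no missing messages. The physical network has degree distribution $\lambda$ ($\lambda_i$ = fraction of physical nodes with $i$ physical neighbours), the cyber network has degree distribution $\rho$ ($\rho_i$ = fraction of cyber nodes with $i$ cyber neighbours), each cyber node controls exactly $a$ physical nodes and each physical node is attached to exactly one cyber node. Each physical node initially fails independently with probability $\epsilon$; a failed physical node defects each physical neighbour with probability $p$. $x_l$ denotes the probability (density) that a physical node is failed after $l$ iterations of message passing, and "the system heals" means $x_l\to0$ as $l\to\infty$. Here $\lambda'(1)$ is the derivative of $\lambda$ at $z=1$, i.e. the average physical degree. *)

theory Defs
  imports Complex_Main
begin

definition degree_dist :: "(nat \<Rightarrow> real) \<Rightarrow> bool" where
  "degree_dist c \<longleftrightarrow> (\<forall>i. c i \<ge> 0) \<and> c 0 = 0 \<and> c sums 1"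

definition genfun :: "(nat \<Rightarrow> real) \<Rightarrow> real \<Rightarrow> real" where
  "genfun c z = (\<Sum>i. c i * z ^ i)"

text \<open>Derivative at 1, i.e. the average degree  c'(1) = sum_i i c_i.\<close>
definition avg_deg :: "(nat \<Rightarrow> real) \<Rightarrow> real" where
  "avg_deg c = (\<Sum>i. real i * c i)"

definition A_fun :: "(nat \<Rightarrow> real) \<Rightarrow> real \<Rightarrow> real \<Rightarrow> real" where
  "A_fun lam p x = x + (1 - x) * (1 - genfun lam (1 - p * x))"

definition B_fun :: "nat \<Rightarrow> (nat \<Rightarrow> real) \<Rightarrow> (nat \<Rightarrow> real) \<Rightarrow> real \<Rightarrow> real \<Rightarrow> real" where
  "B_fun a lam rho p x =
     1 - (1 - A_fun lam p x) ^ (a - 1) * (1 - genfun rho (A_fun lam p x ^ a))"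

definition f_fun :: "nat \<Rightarrow> (nat \<Rightarrow> real) \<Rightarrow> (nat \<Rightarrow> real) \<Rightarrow> real \<Rightarrow> real \<Rightarrow> real" where
  "f_fun a lam rho p x = A_fun lam p x * B_fun a lam rho p x"

definition DE_seq :: "nat \<Rightarrow> (nat \<Rightarrow> real) \<Rightarrow> (nat \<Rightarrow> real) \<Rightarrow> real \<Rightarrow> real \<Rightarrow> nat \<Rightarrow> real" where
  "DE_seq a lam rho p eps l = (f_fun a lam rho p ^^ l) eps"

end

theory Submission
  imports Defs
begin


lemma dd_summable:
  assumes "degree_dist c" "\<bar>z\<bar> \<le> 1"
  shows "summable (\<lambda>i. c i * z ^ i)"
proof (rule summable_comparison_test[where g = c])
  have c: "\<And>i. c i \<ge> 0" "summable c" using assms(1) unfolding degree_dist_def by (auto simp: sums_iff)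
  show "summable c" by (fact c(2))
  show "\<exists>N. \<forall>n\<ge>N. norm (c n * z ^ n) \<le> c n"
  proof (intro exI allI impI)
    fix n :: nat
    have "\<bar>z\<bar> ^ n \<le> 1" using assms(2) by (simp add: power_le_one)
    then show "norm (c n * z ^ n) \<le> c n"
      using c(1)[of n] by (simp add: abs_mult power_abs mult_left_le)
  qed
qed

lemma genfun_1: "degree_dist c \<Longrightarrow> genfun c 1 = 1"
  unfolding genfun_def degree_dist_def by (simp add: sums_iff)

lemma genfun_nonneg: "degree_dist c \<Longrightarrow> 0 \<le> z \<Longrightarrow> z \<le> 1 \<Longrightarrow> 0 \<le> genfun c z"
  unfolding genfun_def
  by (rule suminf_nonneg) (auto simp: dd_summable degree_dist_def)

lemma genfun_le_z:
  assumes "degree_dist c" "0 \<le> z" "z \<le> 1"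
  shows "genfun c z \<le> z"
proof -
  have c: "\<And>i. c i \<ge> 0" "c 0 = 0" "c sums 1" using assms(1) unfolding degree_dist_def by auto
  have s1: "(\<lambda>i. c i * z ^ i) sums genfun c z"
    unfolding genfun_def using dd_summable[OF assms(1)] assms by (simp add: summable_sums)
  have s2: "(\<lambda>i. c i * z) sums (1 * z)" using sums_mult2[OF c(3)] .
  have "\<And>i. c i * z ^ i \<le> c i * z"
  proof -
    fix i :: nat
    show "c i * z ^ i \<le> c i * z"
    proof (cases i)
      case 0 then show ?thesis using c(2) by simp
    next
      case (Suc j)
      have "z ^ i \<le> z" using assms Suc by (simp add: mult_left_le power_le_one)
      then show ?thesis using c(1)[of i] by (simp add: mult_left_mono)
    qed
  qed
  from sums_le[OF this s1 s2] show ?thesis by simp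
qed

lemma avg_deg_sums:
  "summable (\<lambda>i. real i * c i) \<Longrightarrow> (\<lambda>i. real i * c i) sums avg_deg c"
  unfolding avg_deg_def by (simp add: summable_sums)

lemma avg_deg_ge1:
  assumes "degree_dist c" "summable (\<lambda>i. real i * c i)"
  shows "1 \<le> avg_deg c"
proof -
  have c: "\<And>i. c i \<ge> 0" "c 0 = 0" "c sums 1" using assms(1) unfolding degree_dist_def by auto
  have "\<And>i. c i \<le> real i * c i"
  proof -
    fix i :: nat show "c i \<le> real i * c i"
      using c(1)[of i] c(2) by (cases i) (auto simp: algebra_simps)
  qed
  from sums_le[OF this c(3) avg_deg_sums[OF assms(2)]] show ?thesis .
qed

lemma pow_chord:
  fixes t :: real
  assumes "0 \<le> t" "t \<le> 1"
  shows "(1-t)^k * (1 - (real i - real k)*t) \<le> (1-t)^i"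
proof (cases "k \<le> i")
  case True
  then obtain m where i: "i = k + m" by (metis le_add_diff_inverse)
  have "1 + real m * (-t) \<le> (1 + (-t))^m" by (rule Bernoulli_inequality) (use assms in simp)
  then have "1 - real m * t \<le> (1-t)^m" by simp
  then have "(1-t)^k * (1 - real m * t) \<le> (1-t)^k * (1-t)^m"
    using assms by (intro mult_left_mono) auto
  then show ?thesis using i by (simp add: power_add)
next
  case False
  then obtain m where k: "k = i + m" by (metis le_add_diff_inverse nat_le_linear)
  have "1 + real m * t \<le> (1 + t)^m" by (rule Bernoulli_inequality) (use assms in simp)
  moreover have "(1-t)^m * (1+t)^m \<le> 1"
  proof -
    have "(1-t)^m * (1+t)^m = (1 - t^2)^m" by (simp add: power_mult_distrib[symmetric] power2_eq_square algebra_simps)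
    also have "\<dots> \<le> 1" using assms by (intro power_le_one) (auto simp: power_le_one)
    finally show ?thesis .
  qed
  ultimately have h: "(1-t)^m * (1 + real m * t) \<le> 1"
    by (smt (verit) assms mult_left_mono zero_le_power)
  have "(1-t)^k * (1 - (real i - real k)*t) = (1-t)^i * ((1-t)^m * (1 + real m * t))"
    using k by (simp add: power_add algebra_simps)
  also have "\<dots> \<le> (1-t)^i * 1" using h assms by (intro mult_left_mono) auto
  finally show ?thesis by simp
qed

lemma bonf:
  fixes t :: real
  assumes "0 \<le> t" "t \<le> 1"
  shows "1 - real k*t + real k*(real k-1)/2*t^2 - real k*(real k-1)*(real k-2)/6*t^3 \<le> (1-t)^k"
proof (induction k)
  case 0 then show ?case by simp
next
  case (Suc k)
  have nn: "0 \<le> real k*(real k-1)*(real k-2)"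
  proof (cases "k \<ge> 2")
    case True then show ?thesis by simp
  next
    case False then have "k = 0 \<or> k = 1" by auto
    then show ?thesis by auto
  qed
  have "1 - real (Suc k)*t + real (Suc k)*(real (Suc k)-1)/2*t^2 - real (Suc k)*(real (Suc k)-1)*(real (Suc k)-2)/6*t^3
      = (1-t) * (1 - real k*t + real k*(real k-1)/2*t^2 - real k*(real k-1)*(real k-2)/6*t^3)
        - real k*(real k-1)*(real k-2)/6 * t^4"
    by (simp add: of_nat_Suc field_simps power2_eq_square power3_eq_cube power4_eq_xxxx)
  also have "\<dots> \<le> (1-t) * (1 - real k*t + real k*(real k-1)/2*t^2 - real k*(real k-1)*(real k-2)/6*t^3)"
    using nn assms by simp
  also have "\<dots> \<le> (1-t) * (1-t)^k" using Suc assms by (intro mult_left_mono) auto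
  finally show ?case by simp
qed

lemma lam_lower:
  assumes dd: "degree_dist c" and sm: "summable (\<lambda>i. real i * c i)" and t: "0 \<le> t" "t \<le> 1"
  shows "(1-t)^k * (1 - (avg_deg c - real k)*t) \<le> genfun c (1-t)"
proof -
  have c: "\<And>i. c i \<ge> 0" "c sums 1" using dd unfolding degree_dist_def by auto
  have s1: "(\<lambda>i. c i * (1-t)^i) sums genfun c (1-t)"
    unfolding genfun_def using dd_summable[OF dd, of "1-t"] t by (simp add: summable_sums)
  have "(\<lambda>i. c i * (1 + real k * t) - t * (real i * c i)) sums (1 * (1 + real k * t) - t * avg_deg c)"
    by (intro sums_diff sums_mult sums_mult2 c(2) avg_deg_sums sm)
  then have "(\<lambda>i. (1-t)^k * (c i * (1 + real k * t) - t * (real i * c i))) sums ((1-t)^k * (1 * (1 + real k * t) - t * avg_deg c))"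
    by (rule sums_mult)
  then have s2: "(\<lambda>i. c i * ((1-t)^k * (1 - (real i - real k)*t))) sums ((1-t)^k * (1 - (avg_deg c - real k)*t))"
    by (simp add: algebra_simps)
  have "\<And>i. c i * ((1-t)^k * (1 - (real i - real k)*t)) \<le> c i * (1-t)^i"
    using pow_chord[OF t] c(1) by (intro mult_left_mono) auto
  from sums_le[OF this s2 s1] show ?thesis .
qed


lemma bern_G2b:
  fixes w :: real assumes "0 \<le> w" "w \<le> 1"
  shows "(1/10) \<le> (11/12) + (-37/24)*w + (2213/1440)*w^2 + (-37/30)*w^3 + (3001/3840)*w^4 + (-30151/69120)*w^5 + (152507/691200)*w^6 + (-137089/1382400)*w^7 + (133699/3317760)*w^8 + (-82009/5529600)*w^9 + (55393/11059200)*w^10 + (-73429/49152000)*w^11 + (9769/24576000)*w^12 + (-3003/32768000)*w^13 + (3577/196608000)*w^14 + (-343/131072000)*w^15 + (2401/10485760000)*w^16"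
proof -
  have "(11/12) + (-37/24)*w + (2213/1440)*w^2 + (-37/30)*w^3 + (3001/3840)*w^4 + (-30151/69120)*w^5 + (152507/691200)*w^6 + (-137089/1382400)*w^7 + (133699/3317760)*w^8 + (-82009/5529600)*w^9 + (55393/11059200)*w^10 + (-73429/49152000)*w^11 + (9769/24576000)*w^12 + (-3003/32768000)*w^13 + (3577/196608000)*w^14 + (-343/131072000)*w^15 + (2401/10485760000)*w^16 - (1/10) = (49/60)*w^0*(1-w)^16 + (461/40)*w^1*(1-w)^15 + (110033/1440)*w^2*(1-w)^14 + (227333/720)*w^3*(1-w)^13 + (10477123/11520)*w^4*(1-w)^12 + (133744721/69120)*w^5*(1-w)^11 + (724113259/230400)*w^6*(1-w)^10 + (5490235111/1382400)*w^7*(1-w)^9 + (65385606683/16588800)*w^8*(1-w)^8 + (10212658937/3317760)*w^9*(1-w)^7 + (62442620497/33177600)*w^10*(1-w)^6 + (1180413974057/1327104000)*w^11*(1-w)^5 + (421454080171/1327104000)*w^12*(1-w)^4 + (43777086917/530841600)*w^13*(1-w)^3 + (3100187521/212336640)*w^14*(1-w)^2 + (16560153769/10616832000)*w^15*(1-w)^1 + (63316542241/849346560000)*w^16*(1-w)^0"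
    by algebra
  moreover have "0 \<le> (49/60)*w^0*(1-w)^16 + (461/40)*w^1*(1-w)^15 + (110033/1440)*w^2*(1-w)^14 + (227333/720)*w^3*(1-w)^13 + (10477123/11520)*w^4*(1-w)^12 + (133744721/69120)*w^5*(1-w)^11 + (724113259/230400)*w^6*(1-w)^10 + (5490235111/1382400)*w^7*(1-w)^9 + (65385606683/16588800)*w^8*(1-w)^8 + (10212658937/3317760)*w^9*(1-w)^7 + (62442620497/33177600)*w^10*(1-w)^6 + (1180413974057/1327104000)*w^11*(1-w)^5 + (421454080171/1327104000)*w^12*(1-w)^4 + (43777086917/530841600)*w^13*(1-w)^3 + (3100187521/212336640)*w^14*(1-w)^2 + (16560153769/10616832000)*w^15*(1-w)^1 + (63316542241/849346560000)*w^16*(1-w)^0"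
    using assms by (intro add_nonneg_nonneg mult_nonneg_nonneg zero_le_power) auto
  ultimately show ?thesis by linarith
qed

lemma bern_Qa2:
  fixes w :: real assumes "0 \<le> w" "w \<le> 1"
  shows "(1/4) \<le> (753/2048) + (4631/2048)*w + (2531/2048)*w^2 + (1701/2048)*w^3 + (725/1024)*w^4 + (323/1024)*w^5 + (163/1024)*w^6 + (85/1024)*w^7 + (53/2048)*w^8 + (19/2048)*w^9 + (7/2048)*w^10 + (1/2048)*w^11"
proof -
  have "(753/2048) + (4631/2048)*w + (2531/2048)*w^2 + (1701/2048)*w^3 + (725/1024)*w^4 + (323/1024)*w^5 + (163/1024)*w^6 + (85/1024)*w^7 + (53/2048)*w^8 + (19/2048)*w^9 + (7/2048)*w^10 + (1/2048)*w^11 - (1/4) = (241/2048)*w^0*(1-w)^11 + (3641/1024)*w^1*(1-w)^10 + (3881/128)*w^2*(1-w)^9 + (1065/8)*w^3*(1-w)^8 + (46339/128)*w^4*(1-w)^7 + (10585/16)*w^5*(1-w)^6 + (26987/32)*w^6*(1-w)^5 + (12127/16)*w^7*(1-w)^4 + (3793/8)*w^8*(1-w)^3 + (791/4)*w^9*(1-w)^2 + (199/4)*w^10*(1-w)^1 + (23/4)*w^11*(1-w)^0"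
    by algebra
  moreover have "0 \<le> (241/2048)*w^0*(1-w)^11 + (3641/1024)*w^1*(1-w)^10 + (3881/128)*w^2*(1-w)^9 + (1065/8)*w^3*(1-w)^8 + (46339/128)*w^4*(1-w)^7 + (10585/16)*w^5*(1-w)^6 + (26987/32)*w^6*(1-w)^5 + (12127/16)*w^7*(1-w)^4 + (3793/8)*w^8*(1-w)^3 + (791/4)*w^9*(1-w)^2 + (199/4)*w^10*(1-w)^1 + (23/4)*w^11*(1-w)^0"
    using assms by (intro add_nonneg_nonneg mult_nonneg_nonneg zero_le_power) auto
  ultimately show ?thesis by linarith
qed

lemma bern_r:
  fixes w :: real assumes "0 \<le> w" "w \<le> 1"
  shows "(1/400) \<le> (11/60) + (-1/2)*w + (11/24)*w^2 + (-1/8)*w^3"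
proof -
  have "(11/60) + (-1/2)*w + (11/24)*w^2 + (-1/8)*w^3 - (1/400) = (217/1200)*w^0*(1-w)^3 + (17/400)*w^1*(1-w)^2 + (1/1200)*w^2*(1-w)^1 + (17/1200)*w^3*(1-w)^0"
    by algebra
  moreover have "0 \<le> (217/1200)*w^0*(1-w)^3 + (17/400)*w^1*(1-w)^2 + (1/1200)*w^2*(1-w)^1 + (17/1200)*w^3*(1-w)^0"
    using assms by (intro add_nonneg_nonneg mult_nonneg_nonneg zero_le_power) auto
  ultimately show ?thesis by linarith
qed

lemma bern_Abar:
  fixes w :: real assumes "0 \<le> w" "w \<le> 1"
  shows "(1/10) \<le> (1) + (-1/2)*w + (1/8)*w^2 + (-1/12)*w^3 + (1/32)*w^4 + (-7/640)*w^5"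
proof -
  have "(1) + (-1/2)*w + (1/8)*w^2 + (-1/12)*w^3 + (1/32)*w^4 + (-7/640)*w^5 - (1/10) = (9/10)*w^0*(1-w)^5 + (4)*w^1*(1-w)^4 + (57/8)*w^2*(1-w)^3 + (151/24)*w^3*(1-w)^2 + (263/96)*w^4*(1-w)^1 + (887/1920)*w^5*(1-w)^0"
    by algebra
  moreover have "0 \<le> (9/10)*w^0*(1-w)^5 + (4)*w^1*(1-w)^4 + (57/8)*w^2*(1-w)^3 + (151/24)*w^3*(1-w)^2 + (263/96)*w^4*(1-w)^1 + (887/1920)*w^5*(1-w)^0"
    using assms by (intro add_nonneg_nonneg mult_nonneg_nonneg zero_le_power) auto
  ultimately show ?thesis by linarith
qed

definition phi :: "real \<Rightarrow> real" where "phi y = y^2*(1+y-y^2)"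
definition S1 :: "real \<Rightarrow> real \<Rightarrow> real" where
  "S1 u x = u*x - u*(u-1)/2*x^2 + u*(u-1)*(u-2)/6*x^3"
definition Abar :: "real \<Rightarrow> real" where "Abar s = (1)*s + (-1/2)*s^2 + (2/3)*s^3 + (-1/2)*s^4 + (7/20)*s^5"

lemma phi_mono:
  assumes "0 \<le> y" "y \<le> z" "z \<le> 1"
  shows "phi y \<le> phi z"
proof -
  have z2: "z^2 \<le> z" and y2: "y^2 \<le> y" using assms by (auto simp: power2_eq_square mult_left_le)
  have zy: "z*y \<le> z" using assms by (simp add: mult_left_le)
  have "(z+y)*(z^2+y^2) \<le> (z+y)*(z+y)" using z2 y2 assms by (intro mult_left_mono) auto
  then have Q: "0 \<le> (z+y) + (z^2+z*y+y^2) - (z+y)*(z^2+y^2)"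
    using zy assms by (simp add: algebra_simps power2_eq_square)
  have "phi z - phi y = (z-y) * ((z+y) + (z^2+z*y+y^2) - (z+y)*(z^2+y^2))"
    unfolding phi_def by (simp add: algebra_simps power2_eq_square power3_eq_cube power4_eq_xxxx)
  also have "\<dots> \<ge> 0" using Q assms by simp
  finally show ?thesis by simp
qed

lemma alpha_ineq:
  assumes "1/2 \<le> s" "s < 1"
  shows "phi (s - s^3 + s^4) < s^2"
proof -
  have "(1/4) \<le> (753/2048) + (4631/2048)*(2*s-1) + (2531/2048)*(2*s-1)^2 + (1701/2048)*(2*s-1)^3 + (725/1024)*(2*s-1)^4 + (323/1024)*(2*s-1)^5 + (163/1024)*(2*s-1)^6 + (85/1024)*(2*s-1)^7 + (53/2048)*(2*s-1)^8 + (19/2048)*(2*s-1)^9 + (7/2048)*(2*s-1)^10 + (1/2048)*(2*s-1)^11" using bern_Qa2[of "2*s-1"] assms by simp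
  moreover have "(753/2048) + (4631/2048)*(2*s-1) + (2531/2048)*(2*s-1)^2 + (1701/2048)*(2*s-1)^3 + (725/1024)*(2*s-1)^4 + (323/1024)*(2*s-1)^5 + (163/1024)*(2*s-1)^6 + (85/1024)*(2*s-1)^7 + (53/2048)*(2*s-1)^8 + (19/2048)*(2*s-1)^9 + (7/2048)*(2*s-1)^10 + (1/2048)*(2*s-1)^11 = (-1) + (1)*s + (4)*s^2 + (-1)*s^3 + (-3)*s^4 + (6)*s^5 + (1)*s^6 + (-5)*s^7 + (4)*s^8 + (1)*s^9 + (-2)*s^10 + (1)*s^11" by algebra
  ultimately have q: "0 < (-1) + (1)*s + (4)*s^2 + (-1)*s^3 + (-3)*s^4 + (6)*s^5 + (1)*s^6 + (-5)*s^7 + (4)*s^8 + (1)*s^9 + (-2)*s^10 + (1)*s^11" by linarith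
  have "s^2 - phi (s - s^3 + s^4) = s^3*(1-s)^2*((-1) + (1)*s + (4)*s^2 + (-1)*s^3 + (-3)*s^4 + (6)*s^5 + (1)*s^6 + (-5)*s^7 + (4)*s^8 + (1)*s^9 + (-2)*s^10 + (1)*s^11)"
    unfolding phi_def by algebra
  moreover have "0 < s^3*(1-s)^2*((-1) + (1)*s + (4)*s^2 + (-1)*s^3 + (-3)*s^4 + (6)*s^5 + (1)*s^6 + (-5)*s^7 + (4)*s^8 + (1)*s^9 + (-2)*s^10 + (1)*s^11)" using q assms by simp
  ultimately show ?thesis by linarith
qed

lemma beta_ineq:
  assumes "0 < s" "s \<le> 1/2"
  shows "phi (Abar s) < s^2"
proof -
  have "(1/10) \<le> (11/12) + (-37/24)*(2*s) + (2213/1440)*(2*s)^2 + (-37/30)*(2*s)^3 + (3001/3840)*(2*s)^4 + (-30151/69120)*(2*s)^5 + (152507/691200)*(2*s)^6 + (-137089/1382400)*(2*s)^7 + (133699/3317760)*(2*s)^8 + (-82009/5529600)*(2*s)^9 + (55393/11059200)*(2*s)^10 + (-73429/49152000)*(2*s)^11 + (9769/24576000)*(2*s)^12 + (-3003/32768000)*(2*s)^13 + (3577/196608000)*(2*s)^14 + (-343/131072000)*(2*s)^15 + (2401/10485760000)*(2*s)^16" using bern_G2b[of "2*s"] assms by simp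
  moreover have "(11/12) + (-37/24)*(2*s) + (2213/1440)*(2*s)^2 + (-37/30)*(2*s)^3 + (3001/3840)*(2*s)^4 + (-30151/69120)*(2*s)^5 + (152507/691200)*(2*s)^6 + (-137089/1382400)*(2*s)^7 + (133699/3317760)*(2*s)^8 + (-82009/5529600)*(2*s)^9 + (55393/11059200)*(2*s)^10 + (-73429/49152000)*(2*s)^11 + (9769/24576000)*(2*s)^12 + (-3003/32768000)*(2*s)^13 + (3577/196608000)*(2*s)^14 + (-343/131072000)*(2*s)^15 + (2401/10485760000)*(2*s)^16 = (11/12) + (-37/12)*s + (2213/360)*s^2 + (-148/15)*s^3 + (3001/240)*s^4 + (-30151/2160)*s^5 + (152507/10800)*s^6 + (-137089/10800)*s^7 + (133699/12960)*s^8 + (-82009/10800)*s^9 + (55393/10800)*s^10 + (-73429/24000)*s^11 + (9769/6000)*s^12 + (-3003/4000)*s^13 + (3577/12000)*s^14 + (-343/4000)*s^15 + (2401/160000)*s^16" by algebra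
  ultimately have q: "0 < (11/12) + (-37/12)*s + (2213/360)*s^2 + (-148/15)*s^3 + (3001/240)*s^4 + (-30151/2160)*s^5 + (152507/10800)*s^6 + (-137089/10800)*s^7 + (133699/12960)*s^8 + (-82009/10800)*s^9 + (55393/10800)*s^10 + (-73429/24000)*s^11 + (9769/6000)*s^12 + (-3003/4000)*s^13 + (3577/12000)*s^14 + (-343/4000)*s^15 + (2401/160000)*s^16" by linarith
  have "s^2 - phi (Abar s) = s^4*((11/12) + (-37/12)*s + (2213/360)*s^2 + (-148/15)*s^3 + (3001/240)*s^4 + (-30151/2160)*s^5 + (152507/10800)*s^6 + (-137089/10800)*s^7 + (133699/12960)*s^8 + (-82009/10800)*s^9 + (55393/10800)*s^10 + (-73429/24000)*s^11 + (9769/6000)*s^12 + (-3003/4000)*s^13 + (3577/12000)*s^14 + (-343/4000)*s^15 + (2401/160000)*s^16)"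
    unfolding phi_def Abar_def by algebra
  moreover have "0 < s^4*((11/12) + (-37/12)*s + (2213/360)*s^2 + (-148/15)*s^3 + (3001/240)*s^4 + (-30151/2160)*s^5 + (152507/10800)*s^6 + (-137089/10800)*s^7 + (133699/12960)*s^8 + (-82009/10800)*s^9 + (55393/10800)*s^10 + (-73429/24000)*s^11 + (9769/6000)*s^12 + (-3003/4000)*s^13 + (3577/12000)*s^14 + (-343/4000)*s^15 + (2401/160000)*s^16)" using q assms by simp
  ultimately show ?thesis by linarith
qed

lemma Abar_le1:
  assumes "0 \<le> s" "s \<le> 1/2"
  shows "Abar s \<le> 1"
proof -
  have "(1/10) \<le> (1) + (-1/2)*(2*s) + (1/8)*(2*s)^2 + (-1/12)*(2*s)^3 + (1/32)*(2*s)^4 + (-7/640)*(2*s)^5" using bern_Abar[of "2*s"] assms by simp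
  moreover have "(1) + (-1/2)*(2*s) + (1/8)*(2*s)^2 + (-1/12)*(2*s)^3 + (1/32)*(2*s)^4 + (-7/640)*(2*s)^5 = 1 - Abar s" unfolding Abar_def by algebra
  ultimately show ?thesis by linarith
qed

lemma Abeta_le:
  assumes "0 < s" "s \<le> 1/2"
  shows "s^2 + (1-s^2)*S1 (1/s - 1) (s^2) \<le> Abar s"
proof -
  have "(1/400) \<le> (11/60) + (-1/2)*(2*s) + (11/24)*(2*s)^2 + (-1/8)*(2*s)^3" using bern_r[of "2*s"] assms by simp
  moreover have "(11/60) + (-1/2)*(2*s) + (11/24)*(2*s)^2 + (-1/8)*(2*s)^3 = (11/60) + (-1)*s + (11/6)*s^2 + (-1)*s^3" by algebra
  ultimately have q: "0 < (11/60) + (-1)*s + (11/6)*s^2 + (-1)*s^3" by linarith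
  have e1: "s^2 + (1-s^2)*S1 (1/s - 1) (s^2) = (1)*s + (-1/2)*s^2 + (2/3)*s^3 + (-1/2)*s^4 + (1/6)*s^5 + (1)*s^6 + (-11/6)*s^7 + (1)*s^8"
    using assms unfolding S1_def by (simp add: field_simps power2_eq_square power3_eq_cube) algebra
  have "Abar s - ((1)*s + (-1/2)*s^2 + (2/3)*s^3 + (-1/2)*s^4 + (1/6)*s^5 + (1)*s^6 + (-11/6)*s^7 + (1)*s^8) = s^5 * ((11/60) + (-1)*s + (11/6)*s^2 + (-1)*s^3)" unfolding Abar_def by algebra
  moreover have "0 \<le> s^5 * ((11/60) + (-1)*s + (11/6)*s^2 + (-1)*s^3)" using q assms by simp
  ultimately show ?thesis using e1 by linarith
qed

lemma S1_mono:
  assumes "0 \<le> u" "u \<le> U" "0 \<le> x" "x \<le> 1" "U*x \<le> 1/4"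
  shows "S1 u x \<le> S1 U x"
proof -
  have "u*x \<le> U*x" using assms by (intro mult_right_mono) auto
  then have h1: "(U+u)*x \<le> 1/2" using assms by (simp add: algebra_simps)
  have h2: "(U+u)*x^2 \<le> 1/2"
  proof -
    have "(U+u)*x^2 = ((U+u)*x)*x" by (simp add: power2_eq_square)
    also have "\<dots> \<le> (1/2)*1" using h1 assms by (intro mult_mono) auto
    finally show ?thesis by simp
  qed
  have h3: "0 \<le> (U^2+U*u+u^2)*x^2" using assms by simp
  have br: "1 - (U+u-1)*x/2 + (U^2+U*u+u^2 - 3*(U+u) + 2)*x^2/6
      = 1 - ((U+u)*x)/2 + x/2 + ((U^2+U*u+u^2)*x^2)/6 - ((U+u)*x^2)/2 + x^2/3"
    by (simp add: field_simps)
  have x2: "0 \<le> x^2" by simp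
  have brp: "0 \<le> 1 - (U+u-1)*x/2 + (U^2+U*u+u^2 - 3*(U+u) + 2)*x^2/6"
    unfolding br using h1 h2 h3 x2 assms by linarith
  have "S1 U x - S1 u x = (U-u)*x*(1 - (U+u-1)*x/2 + (U^2+U*u+u^2 - 3*(U+u) + 2)*x^2/6)"
    unfolding S1_def by (simp add: field_simps power2_eq_square power3_eq_cube)
  also have "\<dots> \<ge> 0" using brp assms by simp
  finally show ?thesis by simp
qed

lemma L4:
  fixes K del t :: real
  assumes "0 \<le> del" "del \<le> 1" "0 \<le> t" "0 \<le> K" "(K+del)*t \<le> 1" "0 \<le> K*(K-1)*(K-2)"
  shows "1 - (K+del)*t + (K+del)*(K+del-1)/2*t^2 - (K+del)*(K+del-1)*(K+del-2)/6*t^3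
     \<le> (1 - K*t + K*(K-1)/2*t^2 - K*(K-1)*(K-2)/6*t^3)*(1-del*t)"
proof -
  have e: "(1 - K*t + K*(K-1)/2*t^2 - K*(K-1)*(K-2)/6*t^3)*(1-del*t)
     - (1 - (K+del)*t + (K+del)*(K+del-1)/2*t^2 - (K+del)*(K+del-1)*(K+del-2)/6*t^3)
     = del*(1-del)/2*t^2*(1-(K-(2-del)/3)*t) + del*(K*(K-1)*(K-2))/6*t^4"
    by (simp add: field_simps power2_eq_square power3_eq_cube power4_eq_xxxx)
  have "(K-(2-del)/3)*t \<le> K*t" using assms by (simp add: mult_right_mono)
  also have "K*t \<le> (K+del)*t" using assms by (simp add: mult_right_mono)
  finally have "0 \<le> 1-(K-(2-del)/3)*t" using assms by linarith
  then have "0 \<le> del*(1-del)/2*t^2*(1-(K-(2-del)/3)*t)" using assms by simp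
  moreover have "0 \<le> del*(K*(K-1)*(K-2))/6*t^4" using assms by simp
  ultimately show ?thesis using e by linarith
qed

lemma L5:
  fixes p d x :: real
  assumes "0 \<le> p" "p \<le> 1" "0 \<le> d" "0 \<le> x" "p*d*x \<le> 1"
  shows "d*(p*x) - d*(d-1)/2*(p*x)^2 + d*(d-1)*(d-2)/6*(p*x)^3 \<le> S1 (p*d) x"
proof -
  have e: "S1 (p*d) x - (d*(p*x) - d*(d-1)/2*(p*x)^2 + d*(d-1)*(d-2)/6*(p*x)^3)
      = p*d*(1-p)*x^2/2*(1 - (3*(p*d) - 2 - 2*p)*x/3)"
    unfolding S1_def by (simp add: field_simps power2_eq_square power3_eq_cube)
  have "(3*(p*d) - 2 - 2*p)*x/3 \<le> p*d*x" using assms by (simp add: algebra_simps)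
  then have "0 \<le> 1 - (3*(p*d) - 2 - 2*p)*x/3" using assms by linarith
  then have "0 \<le> p*d*(1-p)*x^2/2*(1 - (3*(p*d) - 2 - 2*p)*x/3)" using assms by simp
  then show ?thesis using e by linarith
qed

lemma s_le_S1:
  assumes dd: "degree_dist lam" and sm: "summable (\<lambda>i. real i * lam i)"
    and p: "0 \<le> p" "p \<le> 1" and x: "0 \<le> x" "x \<le> 1" and px: "p * avg_deg lam * x \<le> 1"
  shows "1 - genfun lam (1 - p*x) \<le> S1 (p * avg_deg lam) x"
proof -
  define d where "d = avg_deg lam"
  have d1: "1 \<le> d" unfolding d_def by (rule avg_deg_ge1[OF dd sm])
  define k where "k = nat \<lfloor>d\<rfloor>"
  define K where "K = real k"
  define del where "del = d - K"
  have Kle: "K \<le> d" and dlt: "d < K + 1" unfolding K_def k_def using d1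
    by (auto simp: of_nat_nat)
  have K0: "0 \<le> K" unfolding K_def by simp
  have del: "0 \<le> del" "del \<le> 1" using Kle dlt unfolding del_def by auto
  define t where "t = p*x"
  have t: "0 \<le> t" "t \<le> 1" unfolding t_def using p x by (auto simp: mult_le_one)
  have dt: "(K+del)*t \<le> 1" unfolding del_def t_def using px d_def by (simp add: ac_simps)
  have nn: "0 \<le> K*(K-1)*(K-2)"
  proof (cases "k \<ge> 2")
    case True then show ?thesis unfolding K_def by simp
  next
    case False then have "k = 0 \<or> k = 1" by auto
    then show ?thesis unfolding K_def by auto
  qed
  have g1: "(1-t)^k * (1 - del*t) \<le> genfun lam (1-t)"
    using lam_lower[OF dd sm t, of k] unfolding del_def K_def d_def by simp
  have g2: "(1 - K*t + K*(K-1)/2*t^2 - K*(K-1)*(K-2)/6*t^3) * (1 - del*t) \<le> (1-t)^k * (1 - del*t)"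
  proof (rule mult_right_mono)
    show "1 - K*t + K*(K-1)/2*t^2 - K*(K-1)*(K-2)/6*t^3 \<le> (1-t)^k"
      using bonf[OF t, of k] unfolding K_def .
    show "0 \<le> 1 - del*t" using del t by (smt (verit) mult_le_one)
  qed
  have eqd: "K + del = d" unfolding del_def by simp
  have g3: "1 - d*t + d*(d-1)/2*t^2 - d*(d-1)*(d-2)/6*t^3
     \<le> (1 - K*t + K*(K-1)/2*t^2 - K*(K-1)*(K-2)/6*t^3)*(1-del*t)"
    using L4[OF del(1) del(2) t(1) K0 dt nn] unfolding eqd .
  have g4: "d*t - d*(d-1)/2*t^2 + d*(d-1)*(d-2)/6*t^3 \<le> S1 (p*d) x"
    using L5[OF p, of d x] d1 x px unfolding t_def d_def by simp
  have "1 - genfun lam (1-t) \<le> S1 (p*d) x" using g1 g2 g3 g4 by linarith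
  then show ?thesis unfolding t_def d_def .
qed

lemma conv0:
  fixes F h :: "real \<Rightarrow> real"
  assumes F0: "F 0 = 0" and e: "0 \<le> e" "e \<le> xm"
    and Fh: "\<And>x. 0 < x \<Longrightarrow> x \<le> xm \<Longrightarrow> 0 \<le> F x \<and> F x \<le> x * h x \<and> h x < 1"
    and hc: "\<And>x. 0 < x \<Longrightarrow> x \<le> xm \<Longrightarrow> isCont h x"
  shows "(\<lambda>l. (F ^^ l) e) \<longlonglongrightarrow> 0"
proof -
  define X where "X l = (F ^^ l) e" for l
  have step: "0 \<le> F y \<and> F y \<le> y" if "0 \<le> y" "y \<le> xm" for y
  proof (cases "y = 0")
    case True then show ?thesis using F0 by simp
  next
    case False
    then have y: "0 < y" using that by simp
    from Fh[OF y that(2)] have "0 \<le> F y" "F y \<le> y * h y" "h y < 1" by auto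
    moreover have "y * h y \<le> y" using \<open>h y < 1\<close> y by (simp add: mult_left_le)
    ultimately show ?thesis by linarith
  qed
  have bnd: "0 \<le> X l \<and> X l \<le> e" for l
  proof (induction l)
    case 0 then show ?case using e unfolding X_def by simp
  next
    case (Suc l)
    have "X (Suc l) = F (X l)" unfolding X_def by simp
    then show ?case using step[of "X l"] Suc e by auto
  qed
  have dec: "X (Suc l) \<le> X l" for l
  proof -
    have "X (Suc l) = F (X l)" unfolding X_def by simp
    then show ?thesis using step[of "X l"] bnd[of l] e by auto
  qed
  have "decseq X" using dec by (simp add: decseq_Suc_iff)
  then obtain L where L: "X \<longlonglongrightarrow> L" "\<forall>i. L \<le> X i"
    using decseq_convergent[of X 0] bnd by blast
  have L0: "0 \<le> L" using LIMSEQ_le_const[OF L(1)] bnd by auto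
  have "L = 0"
  proof (rule ccontr)
    assume "L \<noteq> 0"
    then have Lp: "0 < L" using L0 by simp
    have Lx: "L \<le> xm" using L(2) bnd[of 0] e by (meson order_trans)
    have pos: "0 < X l" for l using L(2) Lp by (meson less_le_trans)
    have le: "X (Suc l) \<le> X l * h (X l)" for l
    proof -
      have "X (Suc l) = F (X l)" unfolding X_def by simp
      then show ?thesis using Fh[OF pos[of l]] bnd[of l] e by auto
    qed
    have t1: "(\<lambda>l. X (Suc l)) \<longlonglongrightarrow> L" using L(1) by (rule LIMSEQ_Suc)
    have t2: "(\<lambda>l. X l * h (X l)) \<longlonglongrightarrow> L * h L"
      by (intro tendsto_mult L(1) isCont_tendsto_compose[OF hc[OF Lp Lx]])
    have "L \<le> L * h L" using LIMSEQ_le[OF t1 t2] le by auto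
    moreover have "L * h L < L" using Fh[OF Lp Lx] Lp by simp
    ultimately show False by simp
  qed
  then show ?thesis using L(1) unfolding X_def by simp
qed

lemma g_ge2:
  fixes A :: real
  assumes n: "2 \<le> n" and A: "0 \<le> A" "real n * A \<le> 1"
  shows "1 - real n * A \<le> (1-A)^n * (1 - A^(n+1))"
proof -
  define N where "N = real n"
  have N2: "2 \<le> N" unfolding N_def using n by simp
  have "2*A \<le> N*A" using A N2 by (intro mult_right_mono) auto
  then have Ah: "A \<le> 1/2" using A unfolding N_def by linarith
  have A1: "A \<le> 1" using Ah by simp
  have b: "1 - N*A + N*(N-1)/2*A^2 - N*(N-1)*(N-2)/6*A^3 \<le> (1-A)^n"
    using bonf[OF A(1) A1, of n] unfolding N_def .
  have p1: "(1-A)^n \<le> 1" using A A1 by (simp add: power_le_one)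
  have p2: "A^(n+1) \<le> A^3" using A A1 n by (intro power_decreasing) auto
  have p3: "(1-A)^n * A^(n+1) \<le> A^3"
  proof -
    have "(1-A)^n * A^(n+1) \<le> 1 * A^(n+1)" using p1 A by (intro mult_right_mono) auto
    then show ?thesis using p2 by simp
  qed
  have q1: "N*(N-1)*(N-2)*A \<le> (N-1)*(N-2)"
  proof -
    have "N*(N-1)*(N-2)*A = ((N-1)*(N-2))*(N*A)" by (simp add: algebra_simps)
    also have "\<dots> \<le> ((N-1)*(N-2))*1" using A N2 unfolding N_def by (intro mult_left_mono) auto
    finally show ?thesis by simp
  qed
  have "2*2 \<le> N*N" using N2 by (intro mult_mono) auto
  then have N4: "4 \<le> N*N" by simp
  have e1: "N*(N-1)/2 - (N*(N-1)*(N-2)/6 + 1)*A = N*(N-1)/2 - (N*(N-1)*(N-2)*A)/6 - A"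
    by (simp add: field_simps)
  have e2: "3*(N*(N-1)) - (N-1)*(N-2) = 2*(N*N) - 2"
    by (simp add: algebra_simps)
  have br: "0 \<le> N*(N-1)/2 - (N*(N-1)*(N-2)/6 + 1)*A"
  proof -
    have lin: "0 \<le> Z/2 - X/6 - A"
      if "X \<le> Y" "A \<le> 1/2" "4 \<le> W" "3*Z - Y = 2*W-2" for X Y Z W :: real
      using that by linarith
    show ?thesis unfolding e1 by (rule lin[OF q1 Ah N4 e2])
  qed
  have "(1-A)^n * (1 - A^(n+1)) = (1-A)^n - (1-A)^n * A^(n+1)" by (simp add: algebra_simps)
  then have lowb: "(1-A)^n * (1 - A^(n+1)) \<ge> 1 - N*A + N*(N-1)/2*A^2 - N*(N-1)*(N-2)/6*A^3 - A^3"
    using b p3 by linarith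
  have "(1-A)^n * (1 - A^(n+1)) \<ge> (1 - N*A) + A^2 * (N*(N-1)/2 - (N*(N-1)*(N-2)/6 + 1)*A)"
    using lowb by (simp add: field_simps power2_eq_square power3_eq_cube)
  moreover have "0 \<le> A^2 * (N*(N-1)/2 - (N*(N-1)*(N-2)/6 + 1)*A)" using br by simp
  ultimately show ?thesis unfolding N_def by linarith
qed

theorem theorem4:
  fixes a :: nat and p eps :: real and lam rho :: "nat \<Rightarrow> real"
  assumes "a \<ge> 2"
    and "0 \<le> p" and "p \<le> 1"
    and "degree_dist lam" and "degree_dist rho"
    and "summable (\<lambda>i. real i * lam i)"
    and "0 \<le> eps" and "eps \<le> 1"
    and "eps < 1 / (real (a - 1) * (1 + p * avg_deg lam) ^ 2)"
  shows "DE_seq a lam rho p eps \<longlonglongrightarrow> 0"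
proof -
  define n where "n = a - 1"
  have n1: "1 \<le> n" and an: "a = Suc n" using assms(1) unfolding n_def by auto
  define d where "d = avg_deg lam"
  have d1: "1 \<le> d" using avg_deg_ge1[OF assms(4) assms(6)] d_def by simp
  define u where "u = p*d"
  have u0: "0 \<le> u" using assms(2) d1 u_def by simp
  define c where "c = 1 + u"
  have c1: "1 \<le> c" using u0 c_def by simp
  have rn: "real (a-1) = real n" using n_def by simp
  have c2: "1 \<le> c^2" using c1 by (simp add: one_le_power)
  have nc: "1 \<le> real n * c^2"
  proof -
    have "1*1 \<le> real n * c^2" using n1 c2 by (intro mult_mono) auto
    then show ?thesis by simp
  qed
  have eps_lt: "eps * (real n * c^2) < 1"
  proof -
    have pos: "0 < real n * c^2" using nc by simp
    have "eps < 1 / (real n * c^2)" using assms(9) unfolding rn c_def u_def d_def .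
    then show ?thesis using pos by (simp add: field_simps)
  qed
  define F where "F = f_fun a lam rho p"
  have F0: "F 0 = 0" unfolding F_def f_fun_def A_fun_def using genfun_1[OF assms(4)] by simp
  have basic: "0 \<le> A_fun lam p x \<and> A_fun lam p x \<le> 1 \<and> A_fun lam p x \<le> x + (1-x)*(u*x)
      \<and> A_fun lam p x = x + (1-x)*(1 - genfun lam (1-p*x))
      \<and> 0 \<le> 1 - genfun lam (1-p*x) \<and> 1 - genfun lam (1-p*x) \<le> u*x" if x: "0 \<le> x" "x \<le> 1" for x
  proof -
    have t: "0 \<le> p*x" "p*x \<le> 1" using x assms(2,3) by (auto simp: mult_le_one)
    have g1: "genfun lam (1-p*x) \<le> 1 - p*x" using genfun_le_z[OF assms(4)] t by simp
    have g0: "0 \<le> genfun lam (1-p*x)" using genfun_nonneg[OF assms(4)] t by simp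
    have g2: "1 - d*(p*x) \<le> genfun lam (1-p*x)" using lam_lower[OF assms(4) assms(6) t, of 0] d_def by simp
    define s where "s = 1 - genfun lam (1-p*x)"
    have s: "0 \<le> s" "s \<le> 1" "s \<le> u*x" using g0 g1 g2 t unfolding s_def u_def by (auto simp: algebra_simps)
    have A: "A_fun lam p x = x + (1-x)*s" unfolding A_fun_def s_def by simp
    have "(1-x)*s \<le> (1-x)*1" using s x by (intro mult_left_mono) auto
    moreover have "(1-x)*s \<le> (1-x)*(u*x)" using s x by (intro mult_left_mono) auto
    moreover have "0 \<le> (1-x)*s" using s x by simp
    ultimately show ?thesis using A s x unfolding s_def by auto
  qed
  have Bb: "0 \<le> B_fun a lam rho p x \<and> B_fun a lam rho p x \<le> 1 - (1 - A_fun lam p x)^n * (1 - A_fun lam p x ^ (n+1))"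
    if "0 \<le> x" "x \<le> 1" for x
  proof -
    define A where "A = A_fun lam p x"
    have A: "0 \<le> A" "A \<le> 1" using basic[OF that] A_def by auto
    have Aa: "0 \<le> A^a" "A^a \<le> 1" using A by (auto simp: power_le_one)
    have r1: "genfun rho (A^a) \<le> A^a" using genfun_le_z[OF assms(5) Aa] .
    have r0: "0 \<le> genfun rho (A^a)" using genfun_nonneg[OF assms(5) Aa] .
    have q0: "0 \<le> (1-A)^n" "(1-A)^n \<le> 1" using A by (auto simp: power_le_one)
    have "(1-A)^n * (1 - A^a) \<le> (1-A)^n * (1 - genfun rho (A^a))" using r1 q0 by (intro mult_left_mono) auto
    moreover have "(1-A)^n * (1 - genfun rho (A^a)) \<le> 1 * 1" using q0 r0 r1 Aa by (intro mult_mono) auto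
    ultimately show ?thesis unfolding B_fun_def A_def[symmetric] using an by simp
  qed
  have Fb: "0 \<le> F x \<and> F x \<le> A_fun lam p x * (1 - (1 - A_fun lam p x)^n * (1 - A_fun lam p x ^ (n+1)))"
    if "0 \<le> x" "x \<le> 1" for x
    using Bb[OF that] basic[OF that] unfolding F_def f_fun_def by (auto intro: mult_left_mono)
  have xr: "x < 1 \<and> real n * c^2 * x < 1" if "0 < x" "x \<le> eps" for x
  proof -
    have "x * (real n * c^2) \<le> eps * (real n * c^2)" using that nc by (intro mult_right_mono) auto
    then have h: "real n * c^2 * x < 1" using eps_lt by (simp add: mult.commute)
    have "1 * x \<le> real n * c^2 * x" using nc that by (intro mult_right_mono) auto
    then show ?thesis using h by simp
  qed
  have DE: "DE_seq a lam rho p eps = (\<lambda>l. (F ^^ l) eps)" by (simp add: DE_seq_def F_def fun_eq_iff)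
  show ?thesis
  proof (cases "n = 1")
    case False
    then have n2: "2 \<le> n" using n1 by simp
    define h where "h x = real n * c^2 * x" for x
    show ?thesis unfolding DE
    proof (rule conv0[where xm = eps and h = h])
      show "F 0 = 0" by (fact F0)
      show "0 \<le> eps" "eps \<le> eps" using assms(7) by auto
      show "isCont h x" for x unfolding h_def by (intro continuous_intros)
      fix x assume x: "0 < x" "x \<le> eps"
      have x1: "x < 1" and hx: "real n * c^2 * x < 1" using xr[OF x] by auto
      define A where "A = A_fun lam p x"
      have A: "0 \<le> A" "A \<le> x + (1-x)*(u*x)" using basic[of x] x x1 A_def by auto
      have "(1-x)*(u*x) \<le> 1*(u*x)" using x x1 u0 by (intro mult_right_mono) auto
      then have Acx: "A \<le> c*x" using A unfolding c_def by (simp add: algebra_simps)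
      have "c*x \<le> c^2*x" using c1 x by (intro mult_right_mono) (auto simp: power2_eq_square)
      then have "real n * A \<le> real n * (c^2*x)" using Acx by (intro mult_left_mono) auto
      then have nA: "real n * A \<le> 1" using hx by (simp add: algebra_simps)
      have g: "1 - real n * A \<le> (1-A)^n * (1 - A^(n+1))" by (rule g_ge2[OF n2 A(1) nA])
      have "F x \<le> A * (1 - (1-A)^n * (1 - A^(n+1)))" using Fb[of x] x x1 A_def by auto
      also have "\<dots> \<le> A * (real n * A)" using g A by (intro mult_left_mono) auto
      also have "\<dots> = real n * A^2" by (simp add: power2_eq_square)
      also have "\<dots> \<le> real n * (c*x)^2" using Acx A by (intro mult_left_mono power_mono) auto
      also have "\<dots> = x * h x" unfolding h_def by (simp add: power2_eq_square)
      finally have "F x \<le> x * h x" .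
      moreover have "0 \<le> F x" using Fb[of x] x x1 by auto
      moreover have "h x < 1" unfolding h_def using hx .
      ultimately show "0 \<le> F x \<and> F x \<le> x * h x \<and> h x < 1" by auto
    qed
  next
    case True
    have a2: "a = 2" using an True by simp
    define U where "U x = 1 / sqrt x - 1" for x
    define A1 where "A1 x = x + (1-x)*(U x * x)" for x
    define A2 where "A2 x = x + (1-x)*S1 (U x) x" for x
    define h where "h x = phi (min (A1 x) (A2 x)) / x" for x
    show ?thesis unfolding DE
    proof (rule conv0[where xm = eps and h = h])
      show "F 0 = 0" by (fact F0)
      show "0 \<le> eps" "eps \<le> eps" using assms(7) by auto
      show "isCont h x" if "0 < x" "x \<le> eps" for x
        unfolding h_def A1_def A2_def U_def phi_def S1_def using that
        by (intro continuous_intros) auto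
      fix x assume x: "0 < x" "x \<le> eps"
      have x1: "x < 1" and hx: "c^2 * x < 1" using xr[OF x] True by auto
      define sg where "sg = sqrt x"
      have sg: "0 < sg" "sg < 1" "sg^2 = x" using x x1 unfolding sg_def by auto
      have "(c*sg)^2 < 1" using hx sg by (simp add: power_mult_distrib)
      then have csg: "c*sg < 1" using c1 sg by (smt (verit) one_le_power power2_eq_square mult_nonneg_nonneg)
      have Ux: "U x = 1/sg - 1" unfolding U_def sg_def ..
      have uU: "u < U x"
      proof -
        have "c < 1/sg" using csg sg by (simp add: field_simps)
        then show ?thesis unfolding Ux c_def by simp
      qed
      have Uxx: "U x * x = sg - sg^2" unfolding Ux using sg by (simp add: field_simps power2_eq_square)
      have Uxq: "U x * x \<le> 1/4"
      proof -
        have "0 \<le> (sg - 1/2)^2" by simp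
        then show ?thesis unfolding Uxx by (simp add: power2_eq_square algebra_simps)
      qed
      define A where "A = A_fun lam p x"
      define s where "s = 1 - genfun lam (1-p*x)"
      have bx: "0 \<le> A" "A \<le> 1" "A = x + (1-x)*s" "0 \<le> s" "s \<le> u*x"
        using basic[of x] x x1 unfolding A_def s_def by auto
      have ux: "u*x \<le> U x * x" using uU x by (intro mult_right_mono) auto
      have pdx: "p * avg_deg lam * x \<le> 1" using ux Uxq unfolding u_def d_def by simp
      have sS: "s \<le> S1 u x" using s_le_S1[OF assms(4) assms(6) assms(2) assms(3), of x] x x1 pdx
        unfolding s_def u_def d_def by simp
      have SS: "S1 u x \<le> S1 (U x) x" using S1_mono[OF u0, of "U x" x] uU x x1 Uxq by simp
      have "(1-x)*s \<le> (1-x)*(U x * x)" using bx ux x1 by (intro mult_left_mono) auto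
      then have AA1: "A \<le> A1 x" unfolding A1_def using bx by simp
      have "(1-x)*s \<le> (1-x)*S1 (U x) x" using sS SS x1 by (intro mult_left_mono) auto
      then have AA2: "A \<le> A2 x" unfolding A2_def using bx by simp
      have "(1-x)*(U x * x) \<le> (1-x)*1" using Uxq x1 by (intro mult_left_mono) auto
      then have A11: "A1 x \<le> 1" unfolding A1_def by simp
      define m where "m = min (A1 x) (A2 x)"
      have m: "A \<le> m" "m \<le> A1 x" "m \<le> A2 x" using AA1 AA2 unfolding m_def by auto
      have "F x \<le> A * (1 - (1 - A)^1 * (1 - A ^ 2))" using Fb[of x] x x1 True A_def by (auto simp: power2_eq_square)
      also have "\<dots> = phi A" unfolding phi_def by (simp add: algebra_simps power2_eq_square power3_eq_cube power4_eq_xxxx)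
      also have "\<dots> \<le> phi m" using phi_mono[of A m] m bx A11 by simp
      also have "\<dots> = x * h x" unfolding h_def m_def using x by simp
      finally have Fle: "F x \<le> x * h x" .
      have pm: "phi m < x"
      proof (cases "1/2 \<le> sg")
        case True
        have "A1 x = sg - sg^3 + sg^4" unfolding A1_def Uxx
          using sg by (simp add: algebra_simps power2_eq_square power3_eq_cube power4_eq_xxxx)
        then have "phi m \<le> phi (sg - sg^3 + sg^4)" using phi_mono[of m "A1 x"] m bx A11 by simp
        also have "\<dots> < sg^2" using alpha_ineq[OF True sg(2)] .
        finally show ?thesis using sg by simp
      next
        case False
        have A2e: "A2 x = sg^2 + (1-sg^2)*S1 (1/sg - 1) (sg^2)" unfolding A2_def Ux sg(3) ..
        have "A2 x \<le> Abar sg" unfolding A2e using Abeta_le[of sg] sg False by simp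
        moreover have "Abar sg \<le> 1" using Abar_le1[of sg] sg False by simp
        ultimately have "phi m \<le> phi (Abar sg)" using phi_mono[of m "Abar sg"] m bx by simp
        also have "\<dots> < sg^2" using beta_ineq[of sg] sg False by simp
        finally show ?thesis using sg by simp
      qed
      have "h x < 1" unfolding h_def m_def[symmetric] using pm x by simp
      moreover have "0 \<le> F x" using Fb[of x] x x1 by auto
      ultimately show "0 \<le> F x \<and> F x \<le> x * h x \<and> h x < 1" using Fle by auto
    qed
  qed
qed

end
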